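(* Let $\mathcal{N}$ be a closed chemical reaction network, $\{\omega^1,\dots,\omega^d\}$ a reduced basis of $\Gamma^\perp$, and $\widetilde f_\kappa$ the associated extended rate function. For a rate vector $\kappa\in\mathbb{R}_+^{\mathcal{R}}$, let $\kappa^o$, $g_{\kappa^o}$, $\delta_i$ and $E^n_{d+1}$ be as defined in the context. Then, for every $c\in\mathbb{R}^n$, $$\det(J_c(g_{\kappa^o}))=(-1)^d\det\big(J_c(\widetilde f_\kappa)-E^n_{d+1}\big).$$
   Context: A chemical reaction network $\mathcal{N}=(\mathcal{S},\mathcal{C},\mathcal{R})$ consists of a finite set of species $\mathcal{S}=\{S_1,\dots,S_n\}$, a finite set of complexes $\mathcal{C}\subset\mathbb{Z}_{\ge 0}^n$ (species $S_i$ identified with the $i$-th standard basis vector; the zero complex $0$ allowed), and a finite set of reactions $\mathcal{R}\subset\mathcal{C}\times\mathcal{C}$, written $y\to y'$, with $y\ne y'$. $\mathbb{R}_+$ denotes the positive reals. A rate vector is $\kappa=(k_{y\to y'})\in\mathbb{R}_+^{\mathcal{R}}$; the mass-action species formation rate function is $f_\kappa(c)=\sum_{y\to y'\in\mathcal{R}}k_{y\to y'}c^y(y'-y)$, $c^y=\prod_i c_i^{y_i}$, with components $f_{\kappa,i}$. The stoichiometric subspace is $\Gamma=\mathrm{span}\{y'-y:y\to y'\in\mathcal{R}\}$, $s=\dim\Gamma$, $d=n-s$; the network is closed if $\Gamma\ne\mathbb{R}^n$. A basis $\{\omega^1,\dots,\omega^d\}$ of $\Gamma^\perp$ with $\omega^i=(\lambda^i_1,\dots,\lambda^i_n)$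 is reduced if $\lambda^i_i=1$ and $\lambda^i_j=0$ for all $j\in\{1,\dots,d\}$, $j\ne i$ (species are assumed ordered so that such a basis exists). The extended rate function is $\widetilde f_\kappa(c)=(\omega^1\cdot c,\dots,\omega^d\cdot c,f_{\kappa,d+1}(c),\dots,f_{\kappa,n}(c))$; $J_c$ denotes the Jacobian at $c$. The associated fully open network $\mathcal{N}^o$ has reactions $\mathcal{R}^o=\mathcal{R}\cup\{S_i\to 0: i=1,\dots,n\}$. Let $\mathcal{O}(\mathcal{N})=\{i: S_i\to 0\notin\mathcal{R}\}$. Given $\kappa$, $\kappa^o\in\mathbb{R}_+^{\mathcal{R}^o}$ agrees with $\kappa$ on $\mathcal{R}$ and has $k_{S_i\to 0}=1$ for $i\in\mathcal{O}(\mathcal{N})$; $g_{\kappa^o}$ is the mass-action species formation rate function of $\mathcal{N}^o$ with rate vector $\kappa^o$, i.e. $g_{\kappa^o}(c)=f_\kappa(c)-(\delta_1c_1,\dots,\delta_nc_n)$ with $\delta_i=1$ if $i\in\mathcal{O}(\mathcal{N})$ and $\delta_i=0$ otherwise. $E^n_{d+1}$ is the $n\times n$ diagonal matrix with entry $\delta_i$ at position $(i,i)$ for $i=d+1,\dots,n$ and zeros elsewhere. *)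

theory Defs
  imports "HOL-Analysis.Analysis"
begin

text \<open>Species are indexed by a finite type 'n; complexes are functions 'n \<Rightarrow> nat;
  a reaction y \<rightarrow> y' is the pair (y, y'). Concentrations are vectors in real^'n.\<close>

type_synonym 'n complex = "'n \<Rightarrow> nat"
type_synonym 'n reaction = "'n complex \<times> 'n complex"

definition reaction_vector :: "'n::finite reaction \<Rightarrow> real^'n" where
  "reaction_vector r = (\<chi> i. real (snd r i) - real (fst r i))"

definition monomial :: "real^'n::finite \<Rightarrow> 'n complex \<Rightarrow> real" where
  "monomial c y = (\<Prod>i\<in>UNIV. (c $ i) ^ (y i))"

definition mass_action :: "'n::finite reaction set \<Rightarrow> ('n reaction \<Rightarrow> real) \<Rightarrow> real^'n \<Rightarrow> real^'n" where
  "mass_action R \<kappa> c = (\<Sum>r\<in>R. (\<kappa> r * monomial c (fst r)) *\<^sub>R reaction_vector r)"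

definition stoich_space :: "'n::finite reaction set \<Rightarrow> (real^'n) set" where
  "stoich_space R = span (reaction_vector ` R)"

definition is_network :: "'n::finite reaction set \<Rightarrow> bool" where
  "is_network R \<longleftrightarrow> finite R \<and> (\<forall>r\<in>R. fst r \<noteq> snd r)"

definition closed_network :: "'n::finite reaction set \<Rightarrow> bool" where
  "closed_network R \<longleftrightarrow> stoich_space R \<noteq> UNIV"

text \<open>Reduced basis of the orthogonal complement of Gamma, indexed by the set D of the "first d" species.\<close>
definition reduced_basis :: "'n::finite reaction set \<Rightarrow> 'n set \<Rightarrow> ('n \<Rightarrow> real^'n) \<Rightarrow> bool" where
  "reduced_basis R D \<omega> \<longleftrightarrow>
     inj_on \<omega> D \<and> independent (\<omega> ` D) \<and> span (\<omega> ` D) = orthogonal_comp (stoich_space R) \<and>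
     (\<forall>i\<in>D. \<omega> i $ i = 1 \<and> (\<forall>j\<in>D. j \<noteq> i \<longrightarrow> \<omega> i $ j = 0))"

definition ext_rate :: "'n::finite reaction set \<Rightarrow> ('n reaction \<Rightarrow> real) \<Rightarrow> 'n set \<Rightarrow> ('n \<Rightarrow> real^'n)
    \<Rightarrow> real^'n \<Rightarrow> real^'n" where
  "ext_rate R \<kappa> D \<omega> c = (\<chi> i. if i \<in> D then \<omega> i \<bullet> c else mass_action R \<kappa> c $ i)"

definition species_complex :: "'n \<Rightarrow> 'n complex" where
  "species_complex i = (\<lambda>j. if j = i then 1 else 0)"

definition outflow :: "'n \<Rightarrow> 'n reaction" where
  "outflow i = (species_complex i, (\<lambda>_. 0))"

definition open_reactions :: "'n reaction set \<Rightarrow> 'n reaction set" where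
  "open_reactions R = R \<union> range outflow"

definition open_rates :: "'n reaction set \<Rightarrow> ('n reaction \<Rightarrow> real) \<Rightarrow> 'n reaction \<Rightarrow> real" where
  "open_rates R \<kappa> r = (if r \<in> R then \<kappa> r else 1)"

definition delta :: "'n reaction set \<Rightarrow> 'n \<Rightarrow> real" where
  "delta R i = (if outflow i \<notin> R then 1 else 0)"

definition E_mat :: "'n::finite reaction set \<Rightarrow> 'n set \<Rightarrow> real^'n^'n" where
  "E_mat R D = (\<chi> i j. if i = j \<and> i \<notin> D then delta R i else 0)"

end

theory Submission
  imports Defs
begin

lemma diff_prod_aux:
  fixes f :: "'i \<Rightarrow> 'a::real_normed_vector \<Rightarrow> real"
  assumes "\<And>i. i \<in> I \<Longrightarrow> f i differentiable (at x)"
  shows "(\<lambda>x. \<Prod>i\<in>I. f i x) differentiable (at x)"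
proof -
  from assms obtain f' where "\<And>i. i \<in> I \<Longrightarrow> (f i has_derivative f' i) (at x)"
    unfolding differentiable_def by metis
  then show ?thesis unfolding differentiable_def by (blast intro: has_derivative_prod)
qed

lemma mass_diff: assumes "finite R" shows "mass_action R k differentiable (at (c::real^'n::finite))"
  unfolding mass_action_def monomial_def
  by (intro differentiable_sum ballI differentiable_scaleR differentiable_mult differentiable_const diff_prod_aux differentiable_power assms
       bounded_linear_imp_differentiable[OF bounded_linear_vec_nth])

lemma hd_cart:
  fixes F :: "real^'n::finite \<Rightarrow> real^'m::finite"
  shows "(F has_derivative (\<lambda>h. M *v h)) (at c) \<longleftrightarrow>
     (\<forall>i. ((\<lambda>x. F x $ i) has_derivative (\<lambda>h. M $ i \<bullet> h)) (at c))"
  using has_derivative_componentwise_within[of F "\<lambda>h. M *v h" c UNIV]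
  by (simp add: Basis_vec_def inner_axis matrix_vector_mul_component)

lemma jac_eq:
  fixes F :: "real^'n::finite \<Rightarrow> real^'m::finite"
  assumes "(F has_derivative (\<lambda>h. M *v h)) (at c)"
  shows "jacobian F (at c) = M"
  using frechet_derivative_at[OF assms] unfolding jacobian_def
  by (metis matrix_of_matrix_vector_mul)

lemma detT:
  fixes W :: "'n::finite \<Rightarrow> real^'n"
  assumes "\<And>k j. k \<in> D \<Longrightarrow> j \<in> D \<Longrightarrow> W k $ j = (if j = k then 1 else 0)"
  shows "det (\<chi> k l. if k \<in> D then - (W k $ l) else (if k = l then 1 else 0)) = (-1) ^ card D"
proof -
  define A where "A = ((\<chi> k l. if k \<in> D then - (W k $ l) else (if k = l then 1 else 0)) :: real^'n^'n)"
  have Ae: "A $ k $ l = (if k \<in> D then - (W k $ l) else (if k = l then 1 else 0))" for k l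
    unfolding A_def by simp
  let ?U = "UNIV:: 'n set"
  let ?PU = "{p. p permutes ?U}"
  let ?pp = "\<lambda>p. of_int (sign p) * prod (\<lambda>i. A$i$p i) (UNIV :: 'n set)"
  have fU: "finite ?U" by simp
  have id0: "{id} \<subseteq> ?PU" by (auto simp: permutes_id)
  have p0: "\<forall>p \<in> ?PU - {id}. ?pp p = 0"
  proof
    fix p
    assume p: "p \<in> ?PU - {id}"
    have "\<exists>i. A$i$p i = 0"
    proof (cases "\<exists>j. j \<notin> D \<and> p j \<noteq> j")
      case True
      then obtain j where "j \<notin> D" "p j \<noteq> j" by blast
      then have "A$j$p j = 0" by (simp add: Ae)
      then show ?thesis by blast
    next
      case False
      from p obtain k where k: "p k \<noteq> k" by (auto simp: fun_eq_iff)
      with False have kD: "k \<in> D" by blast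
      have inj: "inj p" using p by (auto dest: permutes_inj)
      have "p k \<in> D"
      proof (rule ccontr)
        assume "p k \<notin> D"
        with False have "p (p k) = p k" by blast
        with inj have "p k = k" by (meson injD)
        with k show False by simp
      qed
      with kD k assms have "A$k$p k = 0" by (simp add: Ae)
      then show ?thesis by blast
    qed
    then obtain i where "A$i$p i = 0" by blast
    then have "prod (\<lambda>i. A$i$p i) ?U = 0" by (intro prod_zero[OF fU]) blast
    then show "?pp p = 0" by simp
  qed
  from sum.mono_neutral_cong_left[OF finite_permutations[OF fU] id0 p0]
  have "det A = prod (\<lambda>i. A$i$i) ?U"
    unfolding det_def by (simp add: sign_id)
  also have "\<dots> = (\<Prod>i\<in>?U. if i \<in> D then -1 else 1)"
    using assms by (intro prod.cong) (auto simp: Ae)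
  also have "\<dots> = (-1) ^ card D"
    by (simp add: prod.If_cases)
  finally show ?thesis unfolding A_def .
qed

lemma sum_split_om:
  fixes W :: "'n::finite \<Rightarrow> real^'n"
  assumes "\<And>j. j \<in> D \<Longrightarrow> W k $ j = (if j = k then 1 else 0)" and "k \<in> D"
  shows "(\<Sum>m\<in>UNIV. W k $ m * X m) = X k + (\<Sum>m\<in>-D. W k $ m * X m)"
proof -
  have "(\<Sum>m\<in>UNIV. W k $ m * X m) = (\<Sum>m\<in>D. W k $ m * X m) + (\<Sum>m\<in>-D. W k $ m * X m)"
  proof -
    have "UNIV = D \<union> -D" by blast
    then have "(\<Sum>m\<in>UNIV. W k $ m * X m) = (\<Sum>m\<in>D \<union> -D. W k $ m * X m)" by simp
    also have "\<dots> = (\<Sum>m\<in>D. W k $ m * X m) + (\<Sum>m\<in>-D. W k $ m * X m)"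
      by (rule sum.union_disjoint) auto
    finally show ?thesis .
  qed
  also have "(\<Sum>m\<in>D. W k $ m * X m) = (\<Sum>m\<in>D. if m = k then X k else 0)"
    using assms by (intro sum.cong) auto
  also have "\<dots> = X k" using assms(2) by simp
  finally show ?thesis .
qed

theorem theorem7p1:
  fixes R :: "'n::finite reaction set" and \<kappa> :: "'n reaction \<Rightarrow> real"
    and D :: "'n set" and \<omega> :: "'n \<Rightarrow> real^'n" and c :: "real^'n"
  assumes "is_network R"
    and "closed_network R"
    and "reduced_basis R D \<omega>"
    and "\<forall>r\<in>R. \<kappa> r > 0"
  shows "det (jacobian (mass_action (open_reactions R) (open_rates R \<kappa>)) (at c))
       = (-1) ^ card D * det (jacobian (ext_rate R \<kappa> D \<omega>) (at c) - E_mat R D)"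
proof -
  have finR: "finite R" using assms(1) by (simp add: is_network_def)
  have span_eq: "span (\<omega> ` D) = orthogonal_comp (stoich_space R)"
    using assms(3) unfolding reduced_basis_def by blast
  have om: "\<omega> i $ j = (if j = i then 1 else 0)" if "i \<in> D" "j \<in> D" for i j
    using assms(3) that unfolding reduced_basis_def by auto
  have orth: "\<omega> k \<bullet> reaction_vector r = 0" if "k \<in> D" "r \<in> R" for k r
  proof -
    have "\<omega> k \<in> orthogonal_comp (stoich_space R)"
      using span_eq span_base[of "\<omega> k" "\<omega> ` D"] that by auto
    moreover have "reaction_vector r \<in> stoich_space R"
      unfolding stoich_space_def using that by (intro span_base) auto
    ultimately show ?thesis by (auto simp: orthogonal_comp_def orthogonal_def inner_commute)
  qed
  have rvout: "reaction_vector (outflow i) = - axis i 1" for i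
    by (simp add: vec_eq_iff reaction_vector_def outflow_def species_complex_def axis_def)
  have K2: "delta R k = 1" if "k \<in> D" for k
  proof (rule ccontr)
    assume "delta R k \<noteq> 1"
    then have "outflow k \<in> R" by (simp add: delta_def split: if_splits)
    from orth[OF that this] have "\<omega> k $ k = 0" by (simp add: rvout inner_axis)
    with om[OF that that] show False by simp
  qed
  have K3: "\<omega> k $ m = 0" if "k \<in> D" "delta R m = 0" for k m
  proof -
    from that have "outflow m \<in> R" by (simp add: delta_def split: if_splits)
    from orth[OF that(1) this] show ?thesis by (simp add: rvout inner_axis)
  qed
  define f where "f = mass_action R \<kappa>"
  define J where "J = jacobian f (at c)"
  have Hf: "(f has_derivative (\<lambda>h. J *v h)) (at c)"
    using mass_diff[OF finR] jacobian_works unfolding f_def J_def by blast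
  have fzero: "\<omega> k \<bullet> f x = 0" if "k \<in> D" for k x
    unfolding f_def mass_action_def using orth[OF that] by (simp add: inner_sum_right)
  have K1: "(\<Sum>m\<in>UNIV. \<omega> k $ m * J $ m $ l) = 0" if "k \<in> D" for k l
  proof -
    have d1: "((\<lambda>x. \<omega> k \<bullet> f x) has_derivative (\<lambda>h. \<omega> k \<bullet> (J *v h))) (at c)"
      by (rule has_derivative_inner_right[OF Hf])
    have "(\<lambda>x. \<omega> k \<bullet> f x) = (\<lambda>x. 0)" using fzero[OF that] by auto
    then have d2: "((\<lambda>x. \<omega> k \<bullet> f x) has_derivative (\<lambda>h. 0)) (at c)" by simp
    have "(\<lambda>h. \<omega> k \<bullet> (J *v h)) = (\<lambda>h. 0)" by (rule has_derivative_unique[OF d1 d2])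
    then have "\<omega> k \<bullet> (J *v axis l 1) = 0" by metis
    then show ?thesis by (simp add: matrix_vector_mult_basis column_def inner_vec_def)
  qed
  define Dm where "Dm = ((\<chi> i j. if i = j then delta R i else 0) :: real^'n^'n)"
  have mono_sp: "monomial x (species_complex i) = x $ i" for x :: "real^'n" and i
  proof -
    have "(\<Prod>j\<in>UNIV. x $ j ^ species_complex i j) = (\<Prod>j\<in>UNIV. if j = i then x $ j else 1)"
      by (rule prod.cong) (auto simp: species_complex_def)
    then show ?thesis unfolding monomial_def by simp
  qed
  have geq: "mass_action (open_reactions R) (open_rates R \<kappa>) x = f x - Dm *v x" for x
  proof -
    let ?h = "\<lambda>r. (open_rates R \<kappa> r * monomial x (fst r)) *\<^sub>R reaction_vector r"
    let ?S = "{i. outflow i \<notin> R}"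
    have inj: "inj (outflow :: 'n \<Rightarrow> 'n reaction)"
      by (rule injI) (auto simp: outflow_def species_complex_def fun_eq_iff split: if_splits)
    have un: "open_reactions R = R \<union> (range outflow - R)" unfolding open_reactions_def by blast
    have h1: "mass_action (open_reactions R) (open_rates R \<kappa>) x = sum ?h R + sum ?h (range outflow - R)"
      unfolding mass_action_def un using finR by (intro sum.union_disjoint) auto
    have h2: "sum ?h R = f x" unfolding f_def mass_action_def
      by (intro sum.cong) (auto simp: open_rates_def)
    have "range outflow - R = outflow ` ?S" by auto
    then have "sum ?h (range outflow - R) = sum ?h (outflow ` ?S)" by simp
    also have "\<dots> = sum (?h \<circ> outflow) ?S"
      by (rule sum.reindex) (rule inj_on_subset[OF inj subset_UNIV])
    also have "\<dots> = (\<Sum>i\<in>?S. x $ i *\<^sub>R (- axis i 1))"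
    proof (rule sum.cong)
      fix i assume "i \<in> ?S"
      then have nR: "outflow i \<notin> R" by simp
      have fo: "fst (outflow i) = species_complex i" by (simp add: outflow_def)
      show "(?h \<circ> outflow) i = x $ i *\<^sub>R (- axis i 1)"
        unfolding comp_def open_rates_def fo mono_sp rvout using nR by simp
    qed simp
    finally have h3: "sum ?h (range outflow - R) = (\<Sum>i\<in>?S. x $ i *\<^sub>R (- axis i 1))" .
    have h4: "(\<Sum>i\<in>?S. x $ i *\<^sub>R (- axis i 1)) = - (Dm *v x)"
    proof -
      have "(\<Sum>i\<in>?S. x $ i *\<^sub>R (- axis i 1)) $ j = - ((Dm *v x) $ j)" for j
      proof -
        have "(Dm *v x) $ j = (\<Sum>ja\<in>UNIV. (if j = ja then delta R j else 0) * x $ ja)"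
          by (simp add: matrix_vector_mult_def Dm_def)
        also have "\<dots> = (\<Sum>ja\<in>UNIV. if ja = j then delta R j * x $ j else 0)"
          by (rule sum.cong) auto
        also have "\<dots> = delta R j * x $ j" by simp
        finally have dmj: "delta R j * x $ j = (Dm *v x) $ j" by simp
        have "(\<Sum>i\<in>?S. x $ i *\<^sub>R (- axis i 1)) $ j = (\<Sum>i\<in>?S. (x $ i *\<^sub>R (- axis i 1)) $ j)"
          by (simp only: sum_eq vec_lambda_beta)
        also have "\<dots> = (\<Sum>i\<in>?S. if i = j then - x $ j else 0)"
          by (rule sum.cong) (auto simp: axis_def)
        also have "\<dots> = (if j \<in> ?S then - x $ j else 0)"
          by (rule sum.delta) simp
        also have "\<dots> = - (delta R j * x $ j)" by (simp add: delta_def)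
        also note dmj
        finally show ?thesis .
      qed
      then show ?thesis by (simp add: vec_eq_iff)
    qed
    show ?thesis using h1 h2 h3 h4 by simp
  qed
  have Hg: "(mass_action (open_reactions R) (open_rates R \<kappa>) has_derivative (\<lambda>h. (J - Dm) *v h)) (at c)"
  proof -
    have "((\<lambda>x. f x - Dm *v x) has_derivative (\<lambda>h. J *v h - Dm *v h)) (at c)"
      by (intro has_derivative_diff Hf bounded_linear_imp_has_derivative matrix_vector_mul_bounded_linear)
    moreover have "(\<lambda>x. f x - Dm *v x) = mass_action (open_reactions R) (open_rates R \<kappa>)"
      using geq by auto
    ultimately show ?thesis by (simp add: matrix_vector_mult_diff_rdistrib)
  qed
  define A0 where "A0 = ((\<chi> i. if i \<in> D then \<omega> i else J $ i) :: real^'n^'n)"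
  have He: "(ext_rate R \<kappa> D \<omega> has_derivative (\<lambda>h. A0 *v h)) (at c)"
    unfolding hd_cart
  proof
    fix i
    show "((\<lambda>x. ext_rate R \<kappa> D \<omega> x $ i) has_derivative (\<lambda>h. A0 $ i \<bullet> h)) (at c)"
    proof (cases "i \<in> D")
      case True
      then show ?thesis
        by (simp add: ext_rate_def A0_def has_derivative_inner_right[OF has_derivative_ident])
    next
      case False
      then show ?thesis using Hf unfolding hd_cart
        by (simp add: ext_rate_def A0_def f_def)
    qed
  qed
  have jg: "jacobian (mass_action (open_reactions R) (open_rates R \<kappa>)) (at c) = J - Dm"
    by (rule jac_eq[OF Hg])
  have je: "jacobian (ext_rate R \<kappa> D \<omega>) (at c) = A0" by (rule jac_eq[OF He])
  define T where "T = ((\<chi> k l. if k \<in> D then - (\<omega> k $ l) else (if k = l then 1 else 0)) :: real^'n^'n)"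
  define B where "B = A0 - E_mat R D"
  have Be: "B $ m $ l = (if m \<in> D then \<omega> m $ l else J $ m $ l - (if m = l then delta R m else 0))" for m l
  proof -
    have "B $ m $ l = A0 $ m $ l - E_mat R D $ m $ l" by (simp add: B_def)
    moreover have "A0 $ m $ l = (if m \<in> D then \<omega> m $ l else J $ m $ l)" by (simp add: A0_def)
    moreover have "E_mat R D $ m $ l = (if m = l \<and> m \<notin> D then delta R m else 0)" by (simp add: E_mat_def)
    ultimately show ?thesis by (cases "m \<in> D") simp_all
  qed
  have prodeq: "J - Dm = T ** B"
  proof -
    have "(T ** B) $ k $ l = (J - Dm) $ k $ l" for k l
    proof (cases "k \<in> D")
      case False
      have "(T ** B) $ k $ l = (\<Sum>m\<in>UNIV. (if k = m then 1 else 0) * B $ m $ l)"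
        using False by (simp add: matrix_matrix_mult_def T_def)
      also have "\<dots> = (\<Sum>m\<in>UNIV. if m = k then B $ k $ l else 0)"
        by (rule sum.cong) auto
      also have "\<dots> = B $ k $ l" by simp
      also have "\<dots> = (J - Dm) $ k $ l" using False by (simp add: Be Dm_def)
      finally show ?thesis .
    next
      case True
      have sp: "\<And>X. (\<Sum>m\<in>UNIV. \<omega> k $ m * X m) = X k + (\<Sum>m\<in>-D. \<omega> k $ m * X m)"
        by (rule sum_split_om[OF _ True]) (simp add: om[OF True])
      have "(T ** B) $ k $ l = - (\<Sum>m\<in>UNIV. \<omega> k $ m * B $ m $ l)"
        using True by (simp add: matrix_matrix_mult_def T_def sum_negf)
      also have "\<dots> = - (B $ k $ l + (\<Sum>m\<in>-D. \<omega> k $ m * B $ m $ l))"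
        by (simp only: sp)
      also have "(\<Sum>m\<in>-D. \<omega> k $ m * B $ m $ l)
          = (\<Sum>m\<in>-D. \<omega> k $ m * J $ m $ l) - (\<Sum>m\<in>-D. \<omega> k $ m * (if m = l then delta R m else 0))"
        by (simp add: Be sum_subtractf[symmetric] right_diff_distrib)
      also have "(\<Sum>m\<in>-D. \<omega> k $ m * (if m = l then delta R m else 0)) = (if l \<in> D then 0 else \<omega> k $ l)"
      proof -
        have "(\<Sum>m\<in>-D. \<omega> k $ m * (if m = l then delta R m else 0))
            = (\<Sum>m\<in>-D. if m = l then \<omega> k $ l * delta R l else 0)"
          by (intro sum.cong) auto
        also have "\<dots> = (if l \<in> D then 0 else \<omega> k $ l * delta R l)" by simp
        also have "\<dots> = (if l \<in> D then 0 else \<omega> k $ l)"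
          using K3[OF True, of l] by (auto simp: delta_def)
        finally show ?thesis .
      qed
      also have "(\<Sum>m\<in>-D. \<omega> k $ m * J $ m $ l) = - J $ k $ l"
        using K1[OF True, of l] sp[of "\<lambda>m. J $ m $ l"] by simp
      finally have "(T ** B) $ k $ l = - (\<omega> k $ l + (- J $ k $ l - (if l \<in> D then 0 else \<omega> k $ l)))"
        using True by (simp add: Be)
      also have "\<dots> = (J - Dm) $ k $ l"
        using True om[OF True, of l] K2[OF True] by (auto simp: Dm_def)
      finally show ?thesis .
    qed
    then show ?thesis by (simp add: vec_eq_iff)
  qed
  have dT: "det T = (-1) ^ card D"
    unfolding T_def by (rule detT) (simp add: om)
  show ?thesis unfolding jg je
    using prodeq det_mul[of T B] dT by (simp add: B_def)
qed
end
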